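(* Let $(X,d)$ be a Hadamard space, $o\in X$ a fixed point and $\|x\|:=d(x,o)$ for $x\in X$. Let $C$ be a nonempty closed convex subset of $X$ and $T:C\to C$ a nonexpansive mapping with nonempty fixed point set $F(T)$. Let $\{\alpha_n\}_{n\ge0}$, $\{\beta_n\}_{n\ge0}$ be sequences in $(0,1)$ and $\{u_n\}_{n\ge0}\subset X$. Let $x_0\in C$ be arbitrary and define for $n\geqslant0$ $$y_n=\alpha_nu_n\oplus(1-\alpha_n)Tx_n,\qquad x_{n+1}=(1-\beta_n)x_n\oplus\beta_nP_Cy_n.$$ Suppose (i) $\lim_{n\to\infty}\alpha_n=0$ and $\sum_{n=0}^\infty\alpha_n=\infty$; (ii) $0<\liminf_{n\to\infty}\beta_n\leqslant\limsup_{n\to\infty}\beta_n<1$; (iii) $\sum_{n=0}^\infty\alpha_n\|u_n\|<\infty$. Then $\{x_n\}$ converges (in the metric $d$) to some $q\in F(T)$.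
   Context: A Hadamard space is a complete CAT(0) space. For $x,y\in X$ and $\lambda\in[0,1]$, $\lambda x\oplus(1-\lambda)y$ denotes the unique point $z$ on the geodesic segment from $x$ to $y$ with $d(z,x)=(1-\lambda)d(x,y)$ and $d(z,y)=\lambda d(x,y)$. $P_C:X\to C$ is the metric projection onto $C$ (the nearest-point map). $T$ nonexpansive means $d(Tx,Ty)\le d(x,y)$ for all $x,y\in C$, and $F(T)=\{x\in C: Tx=x\}$. *)

theory Defs
  imports "HOL-Analysis.Analysis"
begin

definition geodesic_path :: "(real \<Rightarrow> 'a::metric_space) \<Rightarrow> 'a \<Rightarrow> 'a \<Rightarrow> bool" where
  "geodesic_path g x y \<longleftrightarrow> g 0 = x \<and> g (dist x y) = y \<and>
     (\<forall>s\<in>{0..dist x y}. \<forall>t\<in>{0..dist x y}. dist (g s) (g t) = \<bar>s - t\<bar>)"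

definition geodesic_space :: "'a::metric_space itself \<Rightarrow> bool" where
  "geodesic_space _ \<longleftrightarrow> (\<forall>x y::'a. \<exists>g. geodesic_path g x y)"

text \<open>Pairs (point on the side g from x to y, its comparison point on the side [a,b] in the
  Euclidean plane, modelled as the complex numbers).\<close>
definition side_pairs :: "(real \<Rightarrow> 'a::metric_space) \<Rightarrow> 'a \<Rightarrow> 'a \<Rightarrow> complex \<Rightarrow> complex
    \<Rightarrow> ('a \<times> complex) set" where
  "side_pairs g x y a b = {(g s, a + (s / dist x y) *\<^sub>R (b - a)) | s. s \<in> {0..dist x y}}"

definition CAT0 :: "'a::metric_space itself \<Rightarrow> bool" where
  "CAT0 _ \<longleftrightarrow> geodesic_space TYPE('a) \<and>
    (\<forall>(x::'a) y z g1 g2 g3 (a::complex) b c.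
       geodesic_path g1 x y \<and> geodesic_path g2 y z \<and> geodesic_path g3 z x \<and>
       dist a b = dist x y \<and> dist b c = dist y z \<and> dist c a = dist z x \<longrightarrow>
       (\<forall>(p, p') \<in> side_pairs g1 x y a b \<union> side_pairs g2 y z b c \<union> side_pairs g3 z x c a.
        \<forall>(q, q') \<in> side_pairs g1 x y a b \<union> side_pairs g2 y z b c \<union> side_pairs g3 z x c a.
          dist p q \<le> dist p' q'))"

definition hadamard_space :: "'a::metric_space itself \<Rightarrow> bool" where
  "hadamard_space T \<longleftrightarrow> CAT0 T \<and> complete (UNIV :: 'a set)"

text \<open>geo_comb l x y = l x \<oplus> (1-l) y: the point z with d(z,x) = (1-l) d(x,y), d(z,y) = l d(x,y).\<close>
definition geo_comb :: "real \<Rightarrow> 'a::metric_space \<Rightarrow> 'a \<Rightarrow> 'a" where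
  "geo_comb l x y = (THE z. dist z x = (1 - l) * dist x y \<and> dist z y = l * dist x y)"

definition geo_convex :: "'a::metric_space set \<Rightarrow> bool" where
  "geo_convex C \<longleftrightarrow> (\<forall>x\<in>C. \<forall>y\<in>C. \<forall>l\<in>{0..1}. geo_comb l x y \<in> C)"

definition metric_proj :: "'a::metric_space set \<Rightarrow> 'a \<Rightarrow> 'a" where
  "metric_proj C x = (SOME p. p \<in> C \<and> (\<forall>c\<in>C. dist x p \<le> dist x c))"

definition nonexpansive_on :: "'a::metric_space set \<Rightarrow> ('a \<Rightarrow> 'a) \<Rightarrow> bool" where
  "nonexpansive_on C T \<longleftrightarrow> (\<forall>x\<in>C. \<forall>y\<in>C. dist (T x) (T y) \<le> dist x y)"

definition fixpoints_on :: "'a set \<Rightarrow> ('a \<Rightarrow> 'a) \<Rightarrow> 'a set" where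
  "fixpoints_on C T = {x\<in>C. T x = x}"

end

theory Submission
  imports Defs
begin


definition cmpu :: "real \<Rightarrow> real \<Rightarrow> real \<Rightarrow> real" where
  "cmpu p r s = (p^2 + r^2 - s^2) / (2*p)"
definition cmpc :: "real \<Rightarrow> real \<Rightarrow> real \<Rightarrow> complex" where
  "cmpc p r s = Complex (cmpu p r s) (sqrt (r^2 - (cmpu p r s)^2))"

lemma cmpu_sq:
  assumes "0 \<le> p" "0 \<le> r" "0 \<le> s" "s \<le> p + r" "p \<le> r + s" "r \<le> p + s"
  shows "(cmpu p r s)^2 \<le> r^2"
proof (cases "p = 0")
  case True then show ?thesis by (simp add: cmpu_def)
next
  case False
  then have pp: "p > 0" using assms by auto
  have "\<bar>p - r\<bar> \<le> s" using assms by auto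
  then have "(p - r)^2 \<le> s^2" by (metis abs_le_square_iff abs_of_nonneg assms(3) power2_abs)
  then have a: "p^2 + r^2 - s^2 \<le> 2*p*r" by (simp add: power2_diff)
  have "s^2 \<le> (p+r)^2" using assms by (intro power_mono) auto
  then have b: "-(2*p*r) \<le> p^2 + r^2 - s^2" by (simp add: power2_sum)
  have "\<bar>cmpu p r s\<bar> \<le> r" using a b pp unfolding cmpu_def
    by (simp add: abs_le_iff divide_le_eq le_divide_eq) (auto simp: field_simps)
  then show ?thesis using assms by (metis abs_le_square_iff abs_of_nonneg)
qed

lemma cmpc_props:
  assumes "0 \<le> p" "0 \<le> r" "0 \<le> s" "s \<le> p + r" "p \<le> r + s" "r \<le> p + s"
  shows "(Re (cmpc p r s))^2 + (Im (cmpc p r s))^2 = r^2"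
    and "(Re (cmpc p r s) - p)^2 + (Im (cmpc p r s))^2 = s^2"
proof -
  have h: "(cmpu p r s)^2 \<le> r^2" using cmpu_sq assms by blast
  show 1: "(Re (cmpc p r s))^2 + (Im (cmpc p r s))^2 = r^2"
    using h by (simp add: cmpc_def)
  show "(Re (cmpc p r s) - p)^2 + (Im (cmpc p r s))^2 = s^2"
  proof (cases "p = 0")
    case True
    then have "r = s" using assms by auto
    then show ?thesis using 1 True by simp
  next
    case False
    have "(Re (cmpc p r s) - p)^2 + (Im (cmpc p r s))^2 = r^2 - 2 * p * cmpu p r s + p^2"
      using 1 by (simp add: cmpc_def power2_diff algebra_simps)
    also have "2 * p * cmpu p r s = p^2 + r^2 - s^2" using False by (simp add: cmpu_def)
    finally show ?thesis by simp
  qed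
qed

lemma cmod_cmpc: 
  assumes "0 \<le> p" "0 \<le> r" "0 \<le> s" "s \<le> p + r" "p \<le> r + s" "r \<le> p + s"
  shows "cmod (cmpc p r s) = r" "cmod (complex_of_real p - cmpc p r s) = s"
proof -
  have "(cmod (cmpc p r s))^2 = r^2" using cmpc_props(1)[OF assms] by (simp add: cmod_power2)
  then show "cmod (cmpc p r s) = r" using assms(2) by (simp add: power2_eq_iff_nonneg)
  have "(cmod (complex_of_real p - cmpc p r s))^2 = s^2" using cmpc_props(2)[OF assms]
    by (simp add: cmod_power2 power2_commute)
  then show "cmod (complex_of_real p - cmpc p r s) = s" using assms(3) by (simp add: power2_eq_iff_nonneg)
qed

lemma geodesic_rev:
  assumes "geodesic_path h x z"
  shows "geodesic_path (\<lambda>t. h (dist z x - t)) z x"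
  using assms unfolding geodesic_path_def
  by (auto simp: dist_commute)

lemma master:
  assumes cat: "CAT0 TYPE('a::metric_space)"
    and g: "geodesic_path g x y" and h: "geodesic_path h x (z::'a)"
    and sig: "\<sigma> \<in> {0..1}" and tau: "\<tau> \<in> {0..1}"
  shows "dist (g (\<sigma> * dist x y)) (h (\<tau> * dist x z))
     \<le> cmod (\<sigma> *\<^sub>R complex_of_real (dist x y) - \<tau> *\<^sub>R cmpc (dist x y) (dist x z) (dist y z))"
proof -
  define p r s where "p = dist x y" and "r = dist x z" and "s = dist y z"
  define c where "c = cmpc p r s"
  define b where "b = complex_of_real p"
  have tri: "0 \<le> p" "0 \<le> r" "0 \<le> s" "s \<le> p + r" "p \<le> r + s" "r \<le> p + s"
    unfolding p_def r_def s_def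
    by (simp_all, metis dist_commute dist_triangle, metis dist_commute dist_triangle,
        metis dist_commute dist_triangle)
  have cc: "cmod c = r" "cmod (b - c) = s" using cmod_cmpc[OF tri] by (auto simp: c_def b_def)
  from cat obtain g2 where g2: "geodesic_path g2 y z"
    unfolding CAT0_def geodesic_space_def by blast
  define g3 where "g3 = (\<lambda>t. h (dist z x - t))"
  have g3: "geodesic_path g3 z x" unfolding g3_def by (rule geodesic_rev[OF h])
  have d1: "dist 0 b = dist x y" unfolding b_def p_def by simp
  have d2: "dist b c = dist y z" using cc by (simp add: dist_norm s_def)
  have d3: "dist c 0 = dist z x" using cc by (simp add: dist_norm r_def dist_commute)
  have P1: "(g (\<sigma> * p), \<sigma> *\<^sub>R b) \<in> side_pairs g x y 0 b"
  proof -
    have "\<sigma> *\<^sub>R b = 0 + ((\<sigma> * p) / dist x y) *\<^sub>R (b - 0)"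
      using sig by (cases "p = 0") (auto simp: b_def p_def)
    moreover have "\<sigma> * p \<in> {0..dist x y}" using sig tri by (auto simp: p_def mult_le_cancel_right1 mult_left_le_one_le)
    ultimately show ?thesis unfolding side_pairs_def by blast
  qed
  have P3: "(h (\<tau> * r), \<tau> *\<^sub>R c) \<in> side_pairs g3 z x c 0"
  proof -
    have e1: "g3 (r - \<tau> * r) = h (\<tau> * r)" unfolding g3_def r_def by (simp add: dist_commute)
    have "\<tau> *\<^sub>R c = c + ((r - \<tau> * r) / dist z x) *\<^sub>R (0 - c)"
    proof (cases "r = 0")
      case True then have "c = 0" using cc by simp
      then show ?thesis by simp
    next
      case False
      then have "(r - \<tau> * r) / dist z x = 1 - \<tau>" by (simp add: r_def dist_commute field_simps)
      then show ?thesis by (simp add: algebra_simps flip: scaleR_add_left)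
    qed
    moreover have "r - \<tau> * r \<in> {0..dist z x}" using tau tri
      by (auto simp: r_def dist_commute mult_le_cancel_right1 mult_left_le_one_le)
    ultimately show ?thesis unfolding side_pairs_def using e1 by (metis (mono_tags, lifting) mem_Collect_eq)
  qed
  have "dist (g (\<sigma> * p)) (h (\<tau> * r)) \<le> dist (\<sigma> *\<^sub>R b) (\<tau> *\<^sub>R c)"
    using cat g g2 g3 d1 d2 d3 P1 P3 unfolding CAT0_def
    apply (elim conjE)
    apply (drule spec[of _ x], drule spec[of _ y], drule spec[of _ z], drule spec[of _ g],
           drule spec[of _ g2], drule spec[of _ g3], drule spec[of _ 0], drule spec[of _ b], drule spec[of _ c])
    by fastforce
  then show ?thesis by (simp add: dist_norm p_def r_def s_def b_def c_def)
qed



lemma tri_facts: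
  fixes x y z :: "'a::metric_space"
  shows "dist y z \<le> dist x y + dist x z" "dist x y \<le> dist x z + dist y z"
    "dist x z \<le> dist x y + dist y z"
  using dist_triangle[of y z x] dist_triangle[of x y z] dist_triangle[of x z y]
  by (simp_all add: dist_commute)

lemma raw_all:
  assumes cat: "CAT0 TYPE('a::metric_space)"
    and g: "geodesic_path g x y" and sig: "\<sigma> \<in> {0..1}"
  shows "(dist (g (\<sigma> * dist x y)) (z::'a))^2 \<le> (1-\<sigma>) * (dist x z)^2 + \<sigma> * (dist y z)^2 - \<sigma>*(1-\<sigma>)*(dist x y)^2"
    and "dist (g (\<sigma> * dist x y)) z \<le> (1-\<sigma>) * dist x z + \<sigma> * dist y z"
proof -
  from cat obtain h where h: "geodesic_path h x z"
    unfolding CAT0_def geodesic_space_def by blast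
  have hz: "h (1 * dist x z) = z" using h unfolding geodesic_path_def by simp
  define p r s where "p = dist x y" and "r = dist x z" and "s = dist y z"
  define c where "c = cmpc p r s"
  have tri: "0 \<le> p" "0 \<le> r" "0 \<le> s" "s \<le> p + r" "p \<le> r + s" "r \<le> p + s"
    unfolding p_def r_def s_def using tri_facts[where x=x and y=y and z=z] by auto
  have M: "dist (g (\<sigma> * p)) z \<le> cmod (\<sigma> *\<^sub>R complex_of_real p - c)"
  proof -
    have one: "(1::real) \<in> {0..1}" by simp
    show ?thesis using master[OF cat g h sig one] hz by (simp add: p_def r_def s_def c_def)
  qed
  have cp: "(Re c)^2 + (Im c)^2 = r^2" "(Re c - p)^2 + (Im c)^2 = s^2"
    using cmpc_props[OF tri] by (auto simp: c_def)
  have "(cmod (\<sigma> *\<^sub>R complex_of_real p - c))^2 = (\<sigma> * p - Re c)^2 + (Im c)^2"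
    by (simp add: cmod_power2 scaleR_conv_of_real)
  also have "\<dots> = (1-\<sigma>) * ((Re c)^2 + (Im c)^2) + \<sigma> * ((Re c - p)^2 + (Im c)^2) - \<sigma>*(1-\<sigma>)*p^2"
    by (simp add: power2_eq_square algebra_simps)
  also have "\<dots> = (1-\<sigma>) * r^2 + \<sigma> * s^2 - \<sigma>*(1-\<sigma>)*p^2"
    unfolding cp ..
  finally have E: "(cmod (\<sigma> *\<^sub>R complex_of_real p - c))^2 = (1-\<sigma>) * r^2 + \<sigma> * s^2 - \<sigma>*(1-\<sigma>)*p^2" .
  have "(dist (g (\<sigma> * p)) z)^2 \<le> (cmod (\<sigma> *\<^sub>R complex_of_real p - c))^2"
    using M by (intro power_mono) auto
  then show "(dist (g (\<sigma> * dist x y)) (z::'a))^2 \<le> (1-\<sigma>) * (dist x z)^2 + \<sigma> * (dist y z)^2 - \<sigma>*(1-\<sigma>)*(dist x y)^2"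
    using E unfolding p_def r_def s_def by linarith
  have cc: "cmod c = r" "cmod (complex_of_real p - c) = s" using cmod_cmpc[OF tri] by (auto simp: c_def)
  have "\<sigma> *\<^sub>R complex_of_real p - c = \<sigma> *\<^sub>R (complex_of_real p - c) + (1 - \<sigma>) *\<^sub>R (- c)"
    by (simp add: algebra_simps)
  then have "cmod (\<sigma> *\<^sub>R complex_of_real p - c) \<le> cmod (\<sigma> *\<^sub>R (complex_of_real p - c)) + cmod ((1 - \<sigma>) *\<^sub>R (- c))"
    by (metis norm_triangle_ineq)
  also have "\<dots> = \<sigma> * s + (1-\<sigma>) * r" using sig cc by simp
  finally show "dist (g (\<sigma> * dist x y)) z \<le> (1-\<sigma>) * dist x z + \<sigma> * dist y z"
    using M by (simp add: p_def r_def s_def)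
qed

lemma raw_two:
  assumes cat: "CAT0 TYPE('a::metric_space)"
    and g: "geodesic_path g x y" and h: "geodesic_path h x (z::'a)" and sig: "\<sigma> \<in> {0..1}"
  shows "dist (g (\<sigma> * dist x y)) (h (\<sigma> * dist x z)) \<le> \<sigma> * dist y z"
proof -
  define p r s where "p = dist x y" and "r = dist x z" and "s = dist y z"
  have tri: "0 \<le> p" "0 \<le> r" "0 \<le> s" "s \<le> p + r" "p \<le> r + s" "r \<le> p + s"
    unfolding p_def r_def s_def using tri_facts[where x=x and y=y and z=z] by auto
  have cc: "cmod (complex_of_real p - cmpc p r s) = s" using cmod_cmpc[OF tri] by auto
  have "\<sigma> *\<^sub>R complex_of_real p - \<sigma> *\<^sub>R cmpc p r s = \<sigma> *\<^sub>R (complex_of_real p - cmpc p r s)"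
    by (simp add: algebra_simps)
  then show ?thesis using master[OF cat g h sig sig] cc sig
    by (simp add: p_def r_def s_def)
qed

lemma geo_comb_eq:
  assumes cat: "CAT0 TYPE('a::metric_space)"
    and g: "geodesic_path g x (y::'a)" and l: "l \<in> {0..1}"
  shows "geo_comb l x y = g ((1-l) * dist x y)"
proof -
  define p where "p = dist x y"
  define w where "w = g ((1-l) * p)"
  have gi: "g 0 = x" "g p = y" "\<And>s t. s\<in>{0..p} \<Longrightarrow> t\<in>{0..p} \<Longrightarrow> dist (g s) (g t) = \<bar>s - t\<bar>"
    using g unfolding geodesic_path_def p_def by auto
  have lp: "(1-l)*p \<in> {0..p}" using l by (auto simp: p_def mult_left_le_one_le)
  have w1: "dist w x = (1-l) * p" using gi(3)[OF lp, of 0] gi(1) l unfolding w_def by (simp add: p_def)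
  have w2: "dist w y = l * p" using gi(3)[OF lp, of p] gi(2) l
    unfolding w_def by (simp add: p_def algebra_simps)
  show ?thesis unfolding geo_comb_def
  proof (rule the_equality)
    show "dist (g ((1 - l) * dist x y)) x = (1 - l) * dist x y \<and> dist (g ((1 - l) * dist x y)) y = l * dist x y"
      using w1 w2 by (simp add: w_def p_def)
  next
    fix z assume z: "dist z x = (1 - l) * dist x y \<and> dist z y = l * dist x y"
    have l1: "1 - l \<in> {0..1}" using l by auto
    have dx: "dist x z = (1-l)*p" and dy: "dist y z = l*p" using z by (auto simp: dist_commute p_def)
    have "(dist w z)^2 \<le> (1-(1-l)) * (dist x z)^2 + (1-l) * (dist y z)^2 - (1-l)*(1-(1-l))*(dist x y)^2"
      using raw_all(1)[OF cat g l1, of z] by (simp add: w_def p_def)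
    also have "(1-(1-l)) * (dist x z)^2 + (1-l) * (dist y z)^2 - (1-l)*(1-(1-l))*(dist x y)^2
       = l*((1-l)*p)^2 + (1-l)*(l*p)^2 - (1-l)*l*p^2" by (simp add: dx dy p_def)
    also have "\<dots> = 0" by (simp add: power2_eq_square algebra_simps)
    finally have "dist w z = 0" by simp
    then show "z = g ((1 - l) * dist x y)" by (simp add: w_def p_def)
  qed
qed

lemma geo_exists: "CAT0 TYPE('a::metric_space) \<Longrightarrow> \<exists>g. geodesic_path g x (y::'a)"
  unfolding CAT0_def geodesic_space_def by blast

lemma geo_comb_dist:
  assumes cat: "CAT0 TYPE('a::metric_space)" and l: "l \<in> {0..1}"
  shows "dist (geo_comb l x y) x = (1-l) * dist x (y::'a)" "dist (geo_comb l x y) y = l * dist x y"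
proof -
  obtain g where g: "geodesic_path g x y" using geo_exists[OF cat] by blast
  define p where "p = dist x y"
  have gi: "g 0 = x" "g p = y" "\<And>s t. s\<in>{0..p} \<Longrightarrow> t\<in>{0..p} \<Longrightarrow> dist (g s) (g t) = \<bar>s - t\<bar>"
    using g unfolding geodesic_path_def p_def by auto
  have lp: "(1-l)*p \<in> {0..p}" using l by (auto simp: p_def mult_left_le_one_le)
  show "dist (geo_comb l x y) x = (1-l) * dist x (y::'a)"
    using gi(3)[OF lp, of 0] gi(1) l geo_comb_eq[OF cat g l] by (simp add: p_def)
  show "dist (geo_comb l x y) y = l * dist x y"
    using gi(3)[OF lp, of p] gi(2) l geo_comb_eq[OF cat g l] by (simp add: p_def algebra_simps)
qed

lemma geo_comb_sym: "geo_comb l x y = geo_comb (1-l) y x"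
  unfolding geo_comb_def by (simp add: dist_commute conj_commute)

lemma geo_CN:
  assumes cat: "CAT0 TYPE('a::metric_space)" and l: "l \<in> {0..1}"
  shows "(dist (geo_comb l x y) (z::'a))^2 \<le> l * (dist x z)^2 + (1-l) * (dist y z)^2 - l*(1-l)*(dist x y)^2"
proof -
  obtain g where g: "geodesic_path g x y" using geo_exists[OF cat] by blast
  have l1: "1 - l \<in> {0..1}" using l by auto
  show ?thesis using raw_all(1)[OF cat g l1, of z] geo_comb_eq[OF cat g l] by (simp add: algebra_simps)
qed

lemma geo_LIN:
  assumes cat: "CAT0 TYPE('a::metric_space)" and l: "l \<in> {0..1}"
  shows "dist (geo_comb l x y) (z::'a) \<le> l * dist x z + (1-l) * dist y z"
proof -
  obtain g where g: "geodesic_path g x y" using geo_exists[OF cat] by blast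
  have l1: "1 - l \<in> {0..1}" using l by auto
  show ?thesis using raw_all(2)[OF cat g l1, of z] geo_comb_eq[OF cat g l] by (simp add: algebra_simps)
qed

lemma geo_TWO:
  assumes cat: "CAT0 TYPE('a::metric_space)" and l: "l \<in> {0..1}"
  shows "dist (geo_comb l x y) (geo_comb l x z) \<le> (1-l) * dist y (z::'a)"
proof -
  obtain g where g: "geodesic_path g x y" using geo_exists[OF cat] by blast
  obtain h where h: "geodesic_path h x z" using geo_exists[OF cat] by blast
  have l1: "1 - l \<in> {0..1}" using l by auto
  show ?thesis using raw_two[OF cat g h l1] geo_comb_eq[OF cat g l] geo_comb_eq[OF cat h l] by simp
qed



definition LS :: "(nat \<Rightarrow> real) \<Rightarrow> real" where
  "LS s = Inf {M. eventually (\<lambda>n. s n \<le> M) sequentially}"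

lemma LS_bdd:
  fixes B :: real
  assumes "\<forall>n. \<bar>s n\<bar> \<le> B"
  shows "bdd_below {M. eventually (\<lambda>n. s n \<le> M) sequentially}"
proof (rule bdd_belowI)
  fix M assume "M \<in> {M. eventually (\<lambda>n. s n \<le> M) sequentially}"
  then obtain N where "\<forall>n\<ge>N. s n \<le> M" by (auto simp: eventually_sequentially)
  then have "s N \<le> M" by simp
  then show "- B \<le> M" using assms by (smt (verit))
qed

lemma LS_le:
  fixes B :: real
  assumes "\<forall>n. \<bar>s n\<bar> \<le> B" "eventually (\<lambda>n. s n \<le> M) sequentially"
  shows "LS s \<le> M"
  unfolding LS_def by (rule cInf_lower) (use assms LS_bdd[OF assms(1)] in auto)

lemma LS_ev:
  fixes B :: real
  assumes "\<forall>n. \<bar>s n\<bar> \<le> B" "e > 0"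
  shows "eventually (\<lambda>n. s n \<le> LS s + e) sequentially"
proof -
  have ne: "{M. eventually (\<lambda>n. s n \<le> M) sequentially} \<noteq> {}"
    using assms(1) by (auto intro!: exI[of _ B] simp: abs_le_iff)
  have "LS s < LS s + e" using assms by simp
  then have "\<exists>M\<in>{M. eventually (\<lambda>n. s n \<le> M) sequentially}. M < LS s + e"
    using cInf_less_iff[OF ne LS_bdd[OF assms(1)], of "LS s + e"] unfolding LS_def by simp
  then obtain M where M: "eventually (\<lambda>n. s n \<le> M) sequentially" "M < LS s + e"
    by blast
  then show ?thesis by (auto elim: eventually_mono)
qed

lemma LS_comb:
  fixes B B1 B2 :: real
  assumes "\<forall>n. \<bar>s n\<bar> \<le> B" "\<forall>n. \<bar>t1 n\<bar> \<le> B1" "\<forall>n. \<bar>t2 n\<bar> \<le> B2" "0 \<le> a" "0 \<le> b"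
    and ev: "eventually (\<lambda>n. s n \<le> a * t1 n + b * t2 n + c) sequentially"
  shows "LS s \<le> a * LS t1 + b * LS t2 + c"
proof (rule field_le_epsilon)
  fix e :: real assume e: "0 < e"
  define e' where "e' = e / (a + b + 1)"
  have e': "e' > 0" using e assms by (simp add: e'_def)
  have ae: "a * e' + b * e' \<le> e"
  proof -
    have "a * e' + b * e' = (a+b) * e'" by (simp add: algebra_simps)
    also have "\<dots> \<le> (a+b+1) * e'" using e' by simp
    also have "\<dots> = e" using assms by (simp add: e'_def)
    finally show ?thesis .
  qed
  have "eventually (\<lambda>n. s n \<le> a * t1 n + b * t2 n + c \<and> t1 n \<le> LS t1 + e' \<and> t2 n \<le> LS t2 + e') sequentially"
    using eventually_conj[OF ev eventually_conj[OF LS_ev[OF assms(2) e'] LS_ev[OF assms(3) e']]] by simp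
  then have "eventually (\<lambda>n. s n \<le> a * LS t1 + b * LS t2 + c + e) sequentially"
  proof (rule eventually_mono)
    fix n assume h: "s n \<le> a * t1 n + b * t2 n + c \<and> t1 n \<le> LS t1 + e' \<and> t2 n \<le> LS t2 + e'"
    have "a * t1 n \<le> a * (LS t1 + e')" using h assms(4) by (simp add: mult_left_mono)
    moreover have "b * t2 n \<le> b * (LS t2 + e')" using h assms(5) by (simp add: mult_left_mono)
    ultimately show "s n \<le> a * LS t1 + b * LS t2 + c + e" using h ae by (simp add: algebra_simps)
  qed
  then show "LS s \<le> a * LS t1 + b * LS t2 + c + e" by (rule LS_le[OF assms(1)])
qed

lemma LS_nonneg:
  fixes B :: real
  assumes "\<forall>n. \<bar>s n\<bar> \<le> B" "\<forall>n. 0 \<le> s n"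
  shows "0 \<le> LS s"
proof (rule ccontr)
  assume "\<not> 0 \<le> LS s"
  then have "- LS s / 2 > 0" by simp
  from LS_ev[OF assms(1) this] obtain N where "\<forall>n\<ge>N. s n \<le> LS s + - LS s / 2"
    by (auto simp: eventually_sequentially)
  then have "s N \<le> LS s / 2" by simp
  then show False using assms(2)[rule_format, of N] \<open>\<not> 0 \<le> LS s\<close> by linarith
qed

lemma sq_close:
  fixes A B d :: real
  assumes "0 \<le> A" "A \<le> B + d" "0 \<le> d" "0 \<le> B"
  shows "A^2 \<le> B^2 + d * (2*B + d)"
proof -
  have "A^2 \<le> (B + d)^2" using assms by (intro power_mono) auto
  then show ?thesis by (simp add: power2_eq_square algebra_simps)
qed

lemma minimizer:
  fixes f :: "'a::metric_space \<Rightarrow> real"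
  assumes cat: "CAT0 TYPE('a::metric_space)" and comp: "complete (UNIV::'a set)"
    and K: "closed K" "K \<noteq> {}" "geo_convex (K::'a set)"
    and lb: "\<forall>z\<in>K. 0 \<le> f z"
    and mid: "\<forall>a\<in>K. \<forall>b\<in>K. f (geo_comb (1/2) a b) \<le> (f a + f b)/2 - (dist a b)^2/4"
    and lsc: "\<forall>a\<in>K. \<forall>e>0. \<exists>d>0. \<forall>b\<in>K. dist b a < d \<longrightarrow> f a \<le> f b + e"
  shows "\<exists>z\<in>K. \<forall>w\<in>K. f z \<le> f w"
proof -
  define \<mu> where "\<mu> = Inf (f ` K)"
  have bdd: "bdd_below (f ` K)" using lb by (auto intro!: bdd_belowI[of _ 0])
  have ne: "f ` K \<noteq> {}" using K by auto
  have mu_le: "\<And>w. w \<in> K \<Longrightarrow> \<mu> \<le> f w" unfolding \<mu>_def using bdd by (auto intro: cInf_lower)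
  have "\<forall>n. \<exists>z\<in>K. f z < \<mu> + 1/(Suc n)"
  proof
    fix n :: nat
    have "\<mu> < \<mu> + 1/(Suc n)" by simp
    then show "\<exists>z\<in>K. f z < \<mu> + 1/(Suc n)"
      using cInf_less_iff[OF ne bdd, of "\<mu> + 1/Suc n"] unfolding \<mu>_def[symmetric] by auto
  qed
  then obtain zs where zs: "\<And>n. zs n \<in> K" "\<And>n. f (zs n) < \<mu> + 1/(Suc n)" by metis
  have half: "(1/2::real) \<in> {0..1}" by simp
  have dbound: "(dist (zs n) (zs m))^2 < 4 / Suc N" if "n \<ge> N" "m \<ge> N" for n m N
  proof -
    have mK: "geo_comb (1/2) (zs n) (zs m) \<in> K" using K(3) zs(1) half unfolding geo_convex_def by blast
    have "\<mu> \<le> f (geo_comb (1/2) (zs n) (zs m))" by (rule mu_le[OF mK])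
    also have "\<dots> \<le> (f (zs n) + f (zs m))/2 - (dist (zs n) (zs m))^2/4" using mid zs(1) by blast
    finally have "(dist (zs n) (zs m))^2 \<le> 2 * (f (zs n) + f (zs m)) - 4 * \<mu>" by (simp add: field_simps)
    also have "\<dots> < 2 * (\<mu> + 1/Suc n + (\<mu> + 1/Suc m)) - 4 * \<mu>" using zs(2)[of n] zs(2)[of m] by simp
    also have "\<dots> = 2/Suc n + 2/Suc m" by (simp add: algebra_simps)
    also have "\<dots> \<le> 2/Suc N + 2/Suc N" using that by (intro add_mono divide_left_mono) auto
    finally show ?thesis by simp
  qed
  have "Cauchy zs"
  proof (rule metric_CauchyI)
    fix e :: real assume e: "0 < e"
    obtain N :: nat where N: "4 / e^2 < N" using reals_Archimedean2 by blast
    have "4 / Suc N < e^2"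
    proof -
      have "4 / e^2 < Suc N" using N by simp
      then show ?thesis using e by (simp add: field_simps)
    qed
    show "\<exists>M. \<forall>m\<ge>M. \<forall>n\<ge>M. dist (zs m) (zs n) < e"
    proof (intro exI allI impI)
      fix m n assume "m \<ge> N" "n \<ge> N"
      then have "(dist (zs m) (zs n))^2 < e^2" using dbound \<open>4 / Suc N < e^2\<close> by (smt (verit))
      then show "dist (zs m) (zs n) < e" using e by (simp add: power_less_imp_less_base)
    qed
  qed
  then obtain z where z: "zs \<longlonglongrightarrow> z" using comp unfolding complete_def by blast
  have zK: "z \<in> K" using closed_sequentially[OF K(1)] zs(1) z by blast
  have "f z \<le> \<mu>"
  proof (rule field_le_epsilon)
    fix e :: real assume e: "0 < e"
    obtain d where d: "d > 0" "\<forall>b\<in>K. dist b z < d \<longrightarrow> f z \<le> f b + e/2" using lsc zK e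
      by (meson half_gt_zero)
    obtain N1 where N1: "\<forall>n\<ge>N1. dist (zs n) z < d" using z d(1) by (metis LIMSEQ_iff_nz dist_commute)
    obtain N2 :: nat where N2: "2/e < N2" using reals_Archimedean2 by blast
    define n where "n = max N1 N2"
    have "f z \<le> f (zs n) + e/2" using d N1 zs(1) by (simp add: n_def)
    also have "f (zs n) < \<mu> + 1/Suc n" by (rule zs(2))
    also have "1/Suc n \<le> e/2"
    proof -
      have "2/e < Suc n" using N2 by (simp add: n_def)
      then show ?thesis using e by (simp add: field_simps)
    qed
    finally show "f z \<le> \<mu> + e" by simp
  qed
  then show ?thesis using zK mu_le by force
qed

lemma minimizer_unique:
  fixes f :: "'a::metric_space \<Rightarrow> real"
  assumes cat: "CAT0 TYPE('a::metric_space)" and K: "geo_convex (K::'a set)"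
    and mid: "\<forall>a\<in>K. \<forall>b\<in>K. f (geo_comb (1/2) a b) \<le> (f a + f b)/2 - (dist a b)^2/4"
    and z: "z \<in> K" "\<forall>w\<in>K. f z \<le> f w" and b: "b \<in> K" "f b \<le> f z"
  shows "b = z"
proof -
  have half: "(1/2::real) \<in> {0..1}" by simp
  have mK: "geo_comb (1/2) z b \<in> K" using K z b half unfolding geo_convex_def by blast
  have "f z \<le> (f z + f b)/2 - (dist z b)^2/4" using z(2) mK mid z(1) b(1) by (meson order_trans)
  then have "2 * (dist z b)^2 \<le> 4 * f b - 4 * f z" by (simp add: field_simps)
  then have "(dist z b)^2 \<le> 0" using b(2) by linarith
  then show ?thesis by simp
qed

lemma proj_exists:
  assumes cat: "CAT0 TYPE('a::metric_space)" and comp: "complete (UNIV::'a set)"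
    and K: "closed K" "K \<noteq> {}" "geo_convex (K::'a set)"
  shows "\<exists>p\<in>K. \<forall>c\<in>K. dist y p \<le> dist y c"
proof -
  have half: "(1/2::real) \<in> {0..1}" by simp
  have mid: "\<forall>a\<in>K. \<forall>b\<in>K. (\<lambda>z. (dist y z)^2) (geo_comb (1/2) a b) \<le> ((\<lambda>z. (dist y z)^2) a + (\<lambda>z. (dist y z)^2) b)/2 - (dist a b)^2/4"
  proof (intro ballI)
    fix a b assume "a \<in> K" "b \<in> K"
    have "(dist (geo_comb (1/2) a b) y)^2 \<le> 1/2 * (dist a y)^2 + (1 - 1/2) * (dist b y)^2 - 1/2 * (1 - 1/2) * (dist a b)^2"
      by (rule geo_CN[OF cat half])
    then show "(\<lambda>z. (dist y z)^2) (geo_comb (1/2) a b) \<le> ((\<lambda>z. (dist y z)^2) a + (\<lambda>z. (dist y z)^2) b)/2 - (dist a b)^2/4"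
      by (simp add: dist_commute[of y] add_divide_distrib)
  qed
  have lsc: "\<forall>a\<in>K. \<forall>e>0. \<exists>d>0. \<forall>b\<in>K. dist b a < d \<longrightarrow> (dist y a)^2 \<le> (dist y b)^2 + e"
  proof (intro ballI allI impI)
    fix a :: 'a and e :: real assume e: "e > 0"
    define d where "d = min 1 (e / (2 * dist y a + 3))"
    have den: "2 * dist y a + 3 > 0" by (simp add: add_nonneg_pos)
    have d1: "d > 0" using e den by (simp add: d_def)
    have d2: "d \<le> 1" by (simp add: d_def)
    have "d \<le> e / (2 * dist y a + 3)" by (simp add: d_def)
    then have "d * (2 * dist y a + 3) \<le> e / (2 * dist y a + 3) * (2 * dist y a + 3)"
      using den by (intro mult_right_mono) auto
    then have d3: "d * (2 * dist y a + 3) \<le> e" using den by simp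
    note d = d1 d2 d3
    show "\<exists>d>0. \<forall>b\<in>K. dist b a < d \<longrightarrow> (dist y a)^2 \<le> (dist y b)^2 + e"
    proof (intro exI conjI ballI impI)
      fix b assume "b \<in> K" "dist b a < d"
      have t1: "dist y a \<le> dist y b + d" using \<open>dist b a < d\<close> dist_triangle[of y a b] by (simp add: dist_commute)
      have t2: "dist y b \<le> dist y a + d" using \<open>dist b a < d\<close> dist_triangle[of y b a] by (simp add: dist_commute)
      have "(dist y a)^2 \<le> (dist y b)^2 + d * (2 * dist y b + d)"
        using sq_close[OF _ t1] d by simp
      also have "d * (2 * dist y b + d) \<le> d * (2 * dist y a + 3)"
        using t2 d by (intro mult_left_mono) auto
      finally show "(dist y a)^2 \<le> (dist y b)^2 + e" using d by simp
    qed (use d in auto)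
  qed
  obtain p where "p \<in> K" "\<forall>w\<in>K. (dist y p)^2 \<le> (dist y w)^2"
    using minimizer[OF cat comp K, of "\<lambda>z. (dist y z)^2"] mid lsc by auto
  then show ?thesis by (auto simp: power2_le_iff_abs_le[symmetric] abs_le_square_iff)
qed

lemma pythag:
  assumes cat: "CAT0 TYPE('a::metric_space)" and K: "geo_convex (K::'a set)"
    and p: "p \<in> K" "\<forall>c\<in>K. dist y p \<le> dist y c" and c: "c \<in> K"
  shows "(dist y p)^2 + (dist p c)^2 \<le> (dist y c)^2"
proof (rule ccontr)
  define G where "G = (dist y p)^2 + (dist p c)^2 - (dist y c)^2"
  assume "\<not> ?thesis"
  then have G: "G > 0" by (simp add: G_def)
  define D where "D = (dist p c)^2"
  have key: "G \<le> t * D" if t: "0 < t" "t \<le> 1" for t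
  proof -
    have l: "1 - t \<in> {0..1}" using t by auto
    have mK: "geo_comb (1-t) p c \<in> K" using K p c l unfolding geo_convex_def by blast
    have "(dist y p)^2 \<le> (dist y (geo_comb (1-t) p c))^2"
      using p(2) mK by (simp add: power_mono)
    also have "\<dots> \<le> (1-t) * (dist p y)^2 + (1-(1-t)) * (dist c y)^2 - (1-t)*(1-(1-t))*(dist p c)^2"
      using geo_CN[OF cat l, of p c y] by (simp add: dist_commute)
    finally have "t * (dist y p)^2 \<le> t * (dist y c)^2 - t * (1-t) * (dist p c)^2"
      by (simp add: dist_commute algebra_simps)
    then have "t * ((dist y p)^2 + (1-t) * (dist p c)^2) \<le> t * (dist y c)^2"
      by (simp add: algebra_simps)
    then have "(dist y p)^2 + (1-t) * (dist p c)^2 \<le> (dist y c)^2" using t by simp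
    then show ?thesis by (simp add: G_def D_def algebra_simps)
  qed
  have D: "D > 0" using key[of 1] G by simp
  define t where "t = min 1 (G / (2 * D))"
  have "0 < t" "t \<le> 1" using G D by (auto simp: t_def)
  from key[OF this] have "G \<le> t * D" .
  also have "t * D \<le> G / (2*D) * D" using D by (intro mult_right_mono) (auto simp: t_def)
  also have "\<dots> = G / 2" using D by simp
  finally show False using G by simp
qed



lemma demi:
  fixes C :: "'a::metric_space set" and T :: "'a \<Rightarrow> 'a" and ob :: 'a and w :: "nat \<Rightarrow> 'a"
  assumes cat: "CAT0 TYPE('a)" and comp: "complete (UNIV::'a set)"
    and C: "closed C" "geo_convex C" "T ` C \<subseteq> C" and ne: "nonexpansive_on C T"
    and wC: "\<forall>n. w n \<in> C" and wT: "(\<lambda>n. dist (w n) (T (w n))) \<longlonglongrightarrow> 0"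
    and wm: "(\<lambda>n. dist ob (w n)) \<longlonglongrightarrow> m"
  shows "\<exists>q\<in>fixpoints_on C T. dist ob q \<le> m"
proof -
  have half: "(1/2::real) \<in> {0..1}" by simp
  obtain B where B: "\<forall>n. dist ob (w n) \<le> B"
    using convergent_imp_Bseq[OF convergentI[OF wm]] unfolding Bseq_def by auto
  define f where "f z = LS (\<lambda>n. (dist z (w n))^2)" for z
  have bd: "\<forall>n. \<bar>(dist z (w n))^2\<bar> \<le> (dist z ob + B)^2" for z
  proof
    fix n
    have "dist z (w n) \<le> dist z ob + B" using dist_triangle[of z "w n" ob] B by smt
    then show "\<bar>(dist z (w n))^2\<bar> \<le> (dist z ob + B)^2" by (simp add: power_mono)
  qed
  have bd1: "dist z (w n) \<le> dist z ob + B" for z n using dist_triangle[of z "w n" ob] B by smt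
  have lb: "\<forall>z\<in>C. 0 \<le> f z" unfolding f_def using LS_nonneg[OF bd] by auto
  have mid: "\<forall>a\<in>C. \<forall>b\<in>C. f (geo_comb (1/2) a b) \<le> (f a + f b)/2 - (dist a b)^2/4"
  proof (intro ballI)
    fix a b assume "a \<in> C" "b \<in> C"
    have "eventually (\<lambda>n. (dist (geo_comb (1/2) a b) (w n))^2 \<le> 1/2 * (dist a (w n))^2 + 1/2 * (dist b (w n))^2 + (0 - (dist a b)^2/4)) sequentially"
      using geo_CN[OF cat half, of a b] by (auto intro!: always_eventually)
    from LS_comb[OF bd bd bd _ _ this] have "f (geo_comb (1/2) a b) \<le> 1/2 * f a + 1/2 * f b + (0 - (dist a b)^2/4)"
      unfolding f_def by simp
    then show "f (geo_comb (1/2) a b) \<le> (f a + f b)/2 - (dist a b)^2/4" by (simp add: field_simps)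
  qed
  have lsc: "\<forall>a\<in>C. \<forall>e>0. \<exists>d>0. \<forall>b\<in>C. dist b a < d \<longrightarrow> f a \<le> f b + e"
  proof (intro ballI allI impI)
    fix a :: 'a and e :: real assume e: "e > 0"
    define R where "R = dist a ob + B"
    have R0: "0 \<le> R" using bd1[of a 0] unfolding R_def by (smt (verit) zero_le_dist)
    define d where "d = min 1 (e / (2 * R + 3))"
    have den: "2 * R + 3 > 0" using R0 by simp
    have d1: "d > 0" using e den by (simp add: d_def)
    have d2: "d \<le> 1" by (simp add: d_def)
    have "d \<le> e / (2 * R + 3)" by (simp add: d_def)
    then have "d * (2 * R + 3) \<le> e / (2 * R + 3) * (2 * R + 3)"
      using den by (intro mult_right_mono) auto
    then have d3: "d * (2 * R + 3) \<le> e" using den by simp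
    show "\<exists>d>0. \<forall>b\<in>C. dist b a < d \<longrightarrow> f a \<le> f b + e"
    proof (intro exI conjI ballI impI)
      fix b assume "b \<in> C" "dist b a < d"
      have "\<forall>n. (dist a (w n))^2 \<le> 1 * (dist b (w n))^2 + 0 * (dist b (w n))^2 + e"
      proof
        fix n
        have t1: "dist a (w n) \<le> dist b (w n) + d" using \<open>dist b a < d\<close> dist_triangle[of a "w n" b]
          by (simp add: dist_commute)
        have t2: "dist b (w n) \<le> R + 1" using \<open>dist b a < d\<close> dist_triangle[of b "w n" a] bd1[of a n] d2
          unfolding R_def by (simp add: dist_commute)
        have "(dist a (w n))^2 \<le> (dist b (w n))^2 + d * (2 * dist b (w n) + d)"
          using sq_close[OF _ t1] d1 by simp
        also have "d * (2 * dist b (w n) + d) \<le> d * (2 * R + 3)"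
          using t2 d1 d2 by (intro mult_left_mono) auto
        finally show "(dist a (w n))^2 \<le> 1 * (dist b (w n))^2 + 0 * (dist b (w n))^2 + e" using d3 by simp
      qed
      from LS_comb[OF bd bd bd _ _ always_eventually[OF this]]
      show "f a \<le> f b + e" unfolding f_def by simp
    qed (use d1 in auto)
  qed
  have Cne: "C \<noteq> {}" using wC by auto
  obtain A where A: "A \<in> C" "\<forall>z\<in>C. f A \<le> f z"
    using minimizer[OF cat comp C(1) Cne C(2) lb mid lsc] by blast
  have TA: "T A \<in> C" using A C(3) by auto
  have "f (T A) \<le> f A"
  proof (rule field_le_epsilon)
    fix e :: real assume e: "e > 0"
    define R where "R = dist A ob + B"
    have R0: "0 \<le> R" using bd1[of A 0] unfolding R_def by (smt (verit) zero_le_dist)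
    define d where "d = min 1 (e / (2 * R + 3))"
    have den: "2 * R + 3 > 0" using R0 by simp
    have d1: "d > 0" using e den by (simp add: d_def)
    have d2: "d \<le> 1" by (simp add: d_def)
    have "d \<le> e / (2 * R + 3)" by (simp add: d_def)
    then have "d * (2 * R + 3) \<le> e / (2 * R + 3) * (2 * R + 3)"
      using den by (intro mult_right_mono) auto
    then have d3: "d * (2 * R + 3) \<le> e" using den by simp
    have ev: "eventually (\<lambda>n. dist (w n) (T (w n)) < d) sequentially"
      using order_tendstoD(2)[OF wT d1] .
    have "eventually (\<lambda>n. (dist (T A) (w n))^2 \<le> 1 * (dist A (w n))^2 + 0 * (dist A (w n))^2 + e) sequentially"
      using ev
    proof (rule eventually_mono)
      fix n assume hn: "dist (w n) (T (w n)) < d"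
      have "dist (T A) (T (w n)) \<le> dist A (w n)" using ne A(1) wC unfolding nonexpansive_on_def by blast
      then have t1: "dist (T A) (w n) \<le> dist A (w n) + d"
        using dist_triangle[of "T A" "w n" "T (w n)"] hn by (simp add: dist_commute)
      have t2: "dist A (w n) \<le> R" using bd1[of A n] unfolding R_def .
      have "(dist (T A) (w n))^2 \<le> (dist A (w n))^2 + d * (2 * dist A (w n) + d)"
        using sq_close[OF _ t1] d1 by simp
      also have "d * (2 * dist A (w n) + d) \<le> d * (2 * R + 3)"
        using t2 d1 d2 by (intro mult_left_mono) auto
      finally show "(dist (T A) (w n))^2 \<le> 1 * (dist A (w n))^2 + 0 * (dist A (w n))^2 + e" using d3 by simp
    qed
    from LS_comb[OF bd bd bd _ _ this]
    show "f (T A) \<le> f A + e" unfolding f_def by simp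
  qed
  then have TAA: "T A = A" using minimizer_unique[OF cat C(2) mid A TA] by blast
  have AF: "A \<in> fixpoints_on C T" using A TAA by (simp add: fixpoints_on_def)
  have "dist ob A \<le> m"
  proof (rule ccontr)
    assume "\<not> dist ob A \<le> m"
    then have mA: "m < dist ob A" by simp
    define \<rho> where "\<rho> = (dist ob A + m) / 2"
    have rho: "m < \<rho>" "\<rho> < dist ob A" using mA by (auto simp: \<rho>_def)
    define K where "K = C \<inter> cball ob \<rho>"
    have Kc: "closed K" using C(1) by (simp add: K_def closed_Int)
    have Kv: "geo_convex K" unfolding geo_convex_def
    proof (intro ballI)
      fix a b l assume ab: "a \<in> K" "b \<in> K" and l: "(l::real) \<in> {0..1}"
      have "geo_comb l a b \<in> C" using C(2) ab l unfolding geo_convex_def K_def by blast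
      moreover have "dist (geo_comb l a b) ob \<le> l * dist a ob + (1-l) * dist b ob" by (rule geo_LIN[OF cat l])
      moreover have "l * dist a ob \<le> l * \<rho>" using ab l by (intro mult_left_mono) (auto simp: K_def dist_commute)
      moreover have "(1-l) * dist b ob \<le> (1-l) * \<rho>" using ab l by (intro mult_left_mono) (auto simp: K_def dist_commute)
      ultimately show "geo_comb l a b \<in> K" unfolding K_def by (auto simp: dist_commute algebra_simps)
    qed
    have evK: "eventually (\<lambda>n. w n \<in> K) sequentially"
      using order_tendstoD(2)[OF wm rho(1)] wC by (auto simp: K_def elim: eventually_mono)
    then have Kne: "K \<noteq> {}" by (metis empty_iff eventually_happens' sequentially_bot)
    obtain A' where A': "A' \<in> K" "\<forall>c\<in>K. dist A A' \<le> dist A c"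
      using proj_exists[OF cat comp Kc Kne Kv, of A] by blast
    have py: "\<forall>c\<in>K. (dist A A')^2 + (dist A' c)^2 \<le> (dist A c)^2"
      using pythag[OF cat Kv A'] by blast
    have "eventually (\<lambda>n. (dist A' (w n))^2 \<le> 1 * (dist A (w n))^2 + 0 * (dist A (w n))^2 + (0 - (dist A A')^2)) sequentially"
      using evK by (rule eventually_mono) (use py in force)
    from LS_comb[OF bd bd bd _ _ this] have "f A' \<le> f A - (dist A A')^2" unfolding f_def by simp
    moreover have "f A \<le> f A'" using A A' by (auto simp: K_def)
    ultimately have "(dist A A')^2 \<le> 0" by linarith
    then have "A = A'" by simp
    then have "dist ob A \<le> \<rho>" using A' by (auto simp: K_def)
    then show False using rho by simp
  qed
  then show ?thesis using AF by blast
qed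



lemma tail_facts:
  fixes c :: "nat \<Rightarrow> real"
  assumes c0: "\<forall>n. 0 \<le> c n" and cs: "summable c"
  shows "\<forall>n. 0 \<le> suminf c - sum c {..<n}"
    "\<forall>n. suminf c - sum c {..<Suc n} = (suminf c - sum c {..<n}) - c n"
    "(\<lambda>n. suminf c - sum c {..<n}) \<longlonglongrightarrow> 0"
    "\<forall>n m. n \<le> m \<longrightarrow> suminf c - sum c {..<m} \<le> suminf c - sum c {..<n}"
proof -
  show "\<forall>n. 0 \<le> suminf c - sum c {..<n}" using sum_le_suminf[OF cs] c0 by auto
  show "\<forall>n. suminf c - sum c {..<Suc n} = (suminf c - sum c {..<n}) - c n" by simp
  have "(\<lambda>n. sum c {..<n}) \<longlonglongrightarrow> suminf c" using summable_LIMSEQ[OF cs] .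
  then have "(\<lambda>n. suminf c - sum c {..<n}) \<longlonglongrightarrow> suminf c - suminf c" by (intro tendsto_intros)
  then show "(\<lambda>n. suminf c - sum c {..<n}) \<longlonglongrightarrow> 0" by simp
  show "\<forall>n m. n \<le> m \<longrightarrow> suminf c - sum c {..<m} \<le> suminf c - sum c {..<n}"
    using c0 by (auto intro!: sum_mono2)
qed

lemma SY:
  fixes s \<gamma> \<delta> c \<eta> \<rho> :: "nat \<Rightarrow> real"
  assumes s0: "\<forall>n. 0 \<le> s n"
    and g: "\<forall>n. 0 \<le> \<gamma> n \<and> \<gamma> n \<le> 1" and divg: "\<not> summable \<gamma>"
    and r1: "\<forall>n. s (Suc n) \<le> (1 - \<gamma> n) * s n + \<gamma> n * \<delta> n + c n"
    and c0: "\<forall>n. 0 \<le> c n" and cs: "summable c"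
    and r2: "\<forall>n. s (Suc n) \<le> s n - \<eta> n + \<rho> n"
    and rho: "\<rho> \<longlonglongrightarrow> 0"
    and cond: "\<forall>\<epsilon>>0. \<exists>\<theta>>0. \<exists>N. \<forall>n\<ge>N. \<eta> n < \<theta> \<longrightarrow> \<delta> n < \<epsilon>"
  shows "s \<longlonglongrightarrow> 0"
proof -
  define tlc where "tlc = (\<lambda>n. suminf c - sum c {..<n})"
  have TL: "\<forall>n. 0 \<le> tlc n" "\<forall>n. tlc (Suc n) = tlc n - c n" "tlc \<longlonglongrightarrow> 0"
    "\<forall>n m. n \<le> m \<longrightarrow> tlc m \<le> tlc n"
    using tail_facts[OF c0 cs] unfolding tlc_def by auto
  have main: "eventually (\<lambda>n. s n \<le> 3 * \<epsilon>) sequentially" if e: "\<epsilon> > 0" for \<epsilon>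
  proof -
    obtain \<theta> N0 where th: "\<theta> > 0" "\<forall>n\<ge>N0. \<eta> n < \<theta> \<longrightarrow> \<delta> n < \<epsilon>" using cond[rule_format, OF e] by blast
    obtain N1 where N1: "\<forall>n\<ge>N1. \<rho> n < \<theta>/2"
      using order_tendstoD(2)[OF rho, of "\<theta>/2"] th by (auto simp: eventually_sequentially)
    obtain N2 where N2: "\<forall>n\<ge>N2. tlc n < \<epsilon>"
      using order_tendstoD(2)[OF TL(3) e] unfolding eventually_sequentially by blast
    define N where "N = max N0 (max N1 N2)"
    define e' where "e' = \<epsilon> + tlc N"
    have "N \<ge> N2" by (simp add: N_def)
    then have "tlc N < \<epsilon>" using N2 by simp
    then have e'le: "e' \<le> 2 * \<epsilon>" by (simp add: e'_def)
    define t where "t n = s n + tlc n" for n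
    define v where "v n = max (t n - e') 0" for n
    have vstep: "v (Suc n) \<le> v n \<and> (v (Suc n) > 0 \<longrightarrow> v n - v (Suc n) \<ge> min (\<theta>/2) (\<gamma> n * v n))"
      if n: "n \<ge> N" for n
    proof (cases "\<eta> n < \<theta>")
      case True
      then have dl: "\<delta> n < \<epsilon>" using th n by (simp add: N_def)
      have gn: "0 \<le> \<gamma> n" "\<gamma> n \<le> 1" using g by auto
      have "\<gamma> n * \<delta> n \<le> \<gamma> n * \<epsilon>" using dl gn by (intro mult_left_mono) auto
      then have S: "s (Suc n) \<le> (1 - \<gamma> n) * s n + \<gamma> n * \<epsilon> + c n"
        using r1[rule_format, of n] by linarith
      have T1: "tlc (Suc n) = tlc n - c n" using TL(2) by blast
      have "tlc n \<le> tlc N" using TL(4) n by blast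
      then have T2: "\<gamma> n * tlc n \<le> \<gamma> n * tlc N" using gn by (simp add: mult_left_mono)
      have E1: "(1 - \<gamma> n) * (t n - e') = (1 - \<gamma> n) * s n + (tlc n - \<gamma> n * tlc n) - (\<epsilon> - \<gamma> n * \<epsilon>) - (tlc N - \<gamma> n * tlc N)"
        by (simp add: t_def e'_def algebra_simps)
      have E2: "t (Suc n) - e' = s (Suc n) + tlc (Suc n) - \<epsilon> - tlc N" by (simp add: t_def e'_def)
      have A0: "t (Suc n) - e' \<le> (1 - \<gamma> n) * (t n - e')"
        unfolding E1 E2 using S T1 T2 by linarith
      have "(1 - \<gamma> n) * (t n - e') \<le> (1 - \<gamma> n) * v n" using gn by (intro mult_left_mono) (auto simp: v_def)
      then have A: "t (Suc n) - e' \<le> (1 - \<gamma> n) * v n" using A0 by linarith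
      have B: "0 \<le> (1 - \<gamma> n) * v n" using gn by (simp add: v_def)
      have V: "v (Suc n) \<le> (1 - \<gamma> n) * v n" unfolding v_def[of "Suc n"] using A B by (rule max.boundedI)
      have E3: "(1 - \<gamma> n) * v n = v n - \<gamma> n * v n" by (simp add: algebra_simps)
      have G0: "0 \<le> \<gamma> n * v n" using gn by (simp add: v_def)
      have "v (Suc n) \<le> v n" using V E3 G0 by linarith
      moreover have "min (\<theta>/2) (\<gamma> n * v n) \<le> v n - v (Suc n)" using V E3 by linarith
      ultimately show ?thesis by blast
    next
      case False
      have "\<rho> n < \<theta>/2" using N1 n by (simp add: N_def)
      then have "s (Suc n) \<le> s n - \<theta>/2" using r2[rule_format, of n] False by linarith
      moreover have "tlc (Suc n) \<le> tlc n" using TL(2)[rule_format, of n] c0[rule_format, of n] by linarith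
      ultimately have "t (Suc n) \<le> t n - \<theta>/2" by (simp add: t_def)
      then have W: "t (Suc n) - e' \<le> (t n - e') - \<theta>/2" by linarith
      have "v (Suc n) \<le> v n" unfolding v_def using W th by (intro max.mono) auto
      moreover have "min (\<theta>/2) (\<gamma> n * v n) \<le> v n - v (Suc n)" if "v (Suc n) > 0"
      proof -
        have "v (Suc n) = t (Suc n) - e'" using that by (simp add: v_def max_def split: if_splits)
        moreover have "t n - e' \<le> v n" by (simp add: v_def)
        ultimately have "\<theta>/2 \<le> v n - v (Suc n)" using W by linarith
        then show ?thesis by (rule min.coboundedI1)
      qed
      ultimately show ?thesis by blast
    qed
    have vnn: "\<forall>n. 0 \<le> v n" by (simp add: v_def)
    have "eventually (\<lambda>n. v n \<le> \<epsilon>) sequentially"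
    proof (rule ccontr)
      assume "\<not> ?thesis"
      then have big: "\<forall>n\<ge>N. v n > \<epsilon>"
      proof (intro allI impI)
        fix n assume "n \<ge> N"
        show "v n > \<epsilon>"
        proof (rule ccontr)
          assume "\<not> v n > \<epsilon>"
          have "\<forall>m\<ge>n. v m \<le> \<epsilon>"
          proof (intro allI impI)
            fix m assume "m \<ge> n"
            then show "v m \<le> \<epsilon>"
            proof (induction m rule: dec_induct)
              case base then show ?case using \<open>\<not> v n > \<epsilon>\<close> by simp
            next
              case (step m)
              then have "m \<ge> N" using \<open>n \<ge> N\<close> by linarith
              then have "v (Suc m) \<le> v m" using vstep[of m] by blast
              then show ?case using step.IH by linarith
            qed
          qed
          then show False using \<open>\<not> eventually (\<lambda>n. v n \<le> \<epsilon>) sequentially\<close>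
            by (auto simp: eventually_sequentially)
        qed
      qed
      define \<kappa> where "\<kappa> = min (\<theta>/2) \<epsilon>"
      have kp: "\<kappa> > 0" using th e by (simp add: \<kappa>_def)
      have dec: "v n - v (Suc n) \<ge> \<kappa> * \<gamma> n" if "n \<ge> N" for n
      proof -
        have "v (Suc n) > \<epsilon>" using big that by simp
        then have "v (Suc n) > 0" using e by linarith
        then have "v n - v (Suc n) \<ge> min (\<theta>/2) (\<gamma> n * v n)" using vstep[OF that] by blast
        moreover have "\<kappa> * \<gamma> n \<le> \<theta>/2"
        proof -
          have "\<kappa> * \<gamma> n \<le> \<kappa> * 1" using g kp by (intro mult_left_mono) auto
          then show ?thesis by (simp add: \<kappa>_def)
        qed
        moreover have "\<kappa> * \<gamma> n \<le> \<gamma> n * v n"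
        proof -
          have "\<kappa> \<le> \<epsilon>" by (simp add: \<kappa>_def)
          then have "\<kappa> \<le> v n" using big that by force
          then have "\<kappa> * \<gamma> n \<le> v n * \<gamma> n" using g by (intro mult_right_mono) auto
          then show ?thesis by (simp add: mult.commute)
        qed
        ultimately show ?thesis by linarith
      qed
      have tel: "\<kappa> * (\<Sum>k<m. \<gamma> (k + N)) \<le> v N - v (m + N)" for m
      proof (induction m)
        case 0 then show ?case by simp
      next
        case (Suc m)
        have "\<kappa> * (\<Sum>k<Suc m. \<gamma> (k + N)) = \<kappa> * (\<Sum>k<m. \<gamma> (k + N)) + \<kappa> * \<gamma> (m + N)"
          by (simp add: algebra_simps)
        also have "\<dots> \<le> v N - v (m + N) + (v (m + N) - v (Suc (m + N)))"
          using Suc dec[of "m + N"] by simp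
        finally show ?case by simp
      qed
      have "summable (\<lambda>k. \<gamma> (k + N))"
      proof (rule summableI_nonneg_bounded)
        show "\<And>k. 0 \<le> \<gamma> (k + N)" using g by auto
        fix m
        have "\<kappa> * (\<Sum>k<m. \<gamma> (k + N)) \<le> v N" using tel[of m] vnn[rule_format, of "m + N"] by linarith
        then show "(\<Sum>k<m. \<gamma> (k + N)) \<le> v N / \<kappa>" using kp by (simp add: field_simps)
      qed
      then have "summable \<gamma>" by (simp add: summable_iff_shift)
      then show False using divg by simp
    qed
    then show ?thesis
    proof (rule eventually_mono)
      fix n assume "v n \<le> \<epsilon>"
      have "t n - e' \<le> v n" unfolding v_def by (rule max.cobounded1)
      moreover have "t n = s n + tlc n" by (rule t_def)
      ultimately show "s n \<le> 3 * \<epsilon>" using \<open>v n \<le> \<epsilon>\<close> e'le TL(1)[rule_format, of n] by linarith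
    qed
  qed
  show ?thesis
  proof (rule LIMSEQ_I)
    fix r :: real assume r: "0 < r"
    have r4: "r/4 > 0" using r by simp
    obtain N where N: "\<forall>n\<ge>N. s n \<le> 3 * (r/4)" using main[OF r4] unfolding eventually_sequentially by blast
    show "\<exists>no. \<forall>n\<ge>no. norm (s n - 0) < r"
    proof (intro exI allI impI)
      fix n assume "n \<ge> N"
      then have "s n \<le> 3 * (r/4)" using N by blast
      then show "norm (s n - 0) < r" using s0[rule_format, of n] r by simp
    qed
  qed
qed



lemma geo_comb_unique:
  assumes cat: "CAT0 TYPE('a::metric_space)" and l: "l \<in> {0..1}"
    and z: "dist z x = (1-l) * dist x y" "dist z y = l * dist x (y::'a)"
  shows "geo_comb l x y = z"
proof -
  have "(dist (geo_comb l x y) z)^2 \<le> l * (dist x z)^2 + (1-l) * (dist y z)^2 - l*(1-l)*(dist x y)^2"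
    by (rule geo_CN[OF cat l])
  also have "\<dots> = l * ((1-l) * dist x y)^2 + (1-l) * (l * dist x y)^2 - l*(1-l)*(dist x y)^2"
  proof -
    have "dist x z = (1-l) * dist x y" using z(1) dist_commute[of x z] by linarith
    moreover have "dist y z = l * dist x y" using z(2) dist_commute[of y z] by linarith
    ultimately show ?thesis by (simp only:)
  qed
  also have "\<dots> = 0" by (simp add: power2_eq_square algebra_simps)
  finally show ?thesis by simp
qed

lemma conv_bound:
  fixes g X Y K :: real
  assumes "0 \<le> g" "g \<le> 1" "X \<le> K" "Y \<le> K"
  shows "(1 - g) * X + g * Y \<le> K"
proof -
  have "(1 - g) * X \<le> (1 - g) * K" using assms by (intro mult_left_mono) auto
  moreover have "g * Y \<le> g * K" using assms by (intro mult_left_mono) auto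
  ultimately show ?thesis by (simp add: algebra_simps)
qed

lemma fix_closed:
  assumes C: "closed C" and ne: "nonexpansive_on C T"
  shows "closed (fixpoints_on C T)"
  unfolding closed_sequential_limits
proof (intro allI impI)
  fix z l assume H: "(\<forall>n. z n \<in> fixpoints_on C T) \<and> z \<longlonglongrightarrow> l"
  have zC: "\<And>n. z n \<in> C" using H unfolding fixpoints_on_def by blast
  have zT: "\<And>n. T (z n) = z n" using H unfolding fixpoints_on_def by blast
  have zl: "z \<longlonglongrightarrow> l" using H by (rule conjunct2)
  have lC: "l \<in> C" by (rule closed_sequentially[OF C _ zl]) (use zC in blast)
  have nb: "\<And>n. dist (T (z n)) (T l) \<le> dist (z n) l" 
    using ne zC lC unfolding nonexpansive_on_def by blast
  have d0: "(\<lambda>n. dist (z n) l) \<longlonglongrightarrow> 0" using tendsto_dist_iff[THEN iffD1, OF zl] .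
  have "(\<lambda>n. dist (T (z n)) (T l)) \<longlonglongrightarrow> 0"
    by (rule Lim_null_comparison[OF _ d0]) (use nb in \<open>auto intro: always_eventually\<close>)
  then have "(\<lambda>n. T (z n)) \<longlonglongrightarrow> T l" by (rule tendsto_dist_iff[THEN iffD2])
  then have "z \<longlonglongrightarrow> T l" unfolding zT .
  then have "T l = l" by (rule LIMSEQ_unique[OF zl, symmetric])
  then show "l \<in> fixpoints_on C T" using lC by (simp add: fixpoints_on_def)
qed

lemma fix_convex:
  assumes cat: "CAT0 TYPE('a::metric_space)" and C: "geo_convex (C::'a set)" and ne: "nonexpansive_on C T"
  shows "geo_convex (fixpoints_on C T)"
  unfolding geo_convex_def
proof (intro ballI)
  fix p1 p2 l assume p: "p1 \<in> fixpoints_on C T" "p2 \<in> fixpoints_on C T" and l: "(l::real) \<in> {0..1}"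
  define m where "m = geo_comb l p1 p2"
  define D where "D = dist p1 p2"
  have mC: "m \<in> C" using C p l unfolding geo_convex_def m_def fixpoints_on_def by blast
  have pC: "p1 \<in> C" "p2 \<in> C" "T p1 = p1" "T p2 = p2" using p by (auto simp: fixpoints_on_def)
  have nT: "dist (T m) (T p) \<le> dist m p" if "p \<in> C" for p using ne mC that unfolding nonexpansive_on_def by blast
  have d1: "dist (T m) p1 \<le> (1-l) * D"
    using nT[OF pC(1)] pC(3) geo_comb_dist(1)[OF cat l, of p1 p2] unfolding m_def D_def by simp
  have d2: "dist (T m) p2 \<le> l * D"
    using nT[OF pC(2)] pC(4) geo_comb_dist(2)[OF cat l, of p1 p2] unfolding m_def D_def by simp
  have "D \<le> dist (T m) p1 + dist (T m) p2" unfolding D_def using dist_triangle[of p1 p2 "T m"] by (simp add: dist_commute)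
  then have e1: "dist (T m) p1 = (1-l) * D" and e2: "dist (T m) p2 = l * D" using d1 d2 by (simp_all add: algebra_simps)
  have "geo_comb l p1 p2 = T m" using geo_comb_unique[OF cat l] e1 e2 by (simp add: D_def)
  then show "geo_comb l p1 p2 \<in> fixpoints_on C T" using mC by (simp add: fixpoints_on_def m_def)
qed



theorem theorem4p2:
  fixes C :: "'a::metric_space set" and T :: "'a \<Rightarrow> 'a" and ob :: 'a
    and \<alpha> \<beta> :: "nat \<Rightarrow> real" and u x y :: "nat \<Rightarrow> 'a"
  assumes "hadamard_space TYPE('a)"
    and "C \<noteq> {}" and "closed C" and "geo_convex C"
    and "T ` C \<subseteq> C" and "nonexpansive_on C T" and "fixpoints_on C T \<noteq> {}"
    and "\<And>n. \<alpha> n \<in> {0<..<1}" and "\<And>n. \<beta> n \<in> {0<..<1}"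
    and "x 0 \<in> C"
    and "\<And>n. y n = geo_comb (\<alpha> n) (u n) (T (x n))"
    and "\<And>n. x (Suc n) = geo_comb (1 - \<beta> n) (x n) (metric_proj C (y n))"
    and "\<alpha> \<longlonglongrightarrow> 0" and "\<not> summable \<alpha>"
    and "0 < liminf (\<lambda>n. ereal (\<beta> n))" and "limsup (\<lambda>n. ereal (\<beta> n)) < 1"
    and "summable (\<lambda>n. \<alpha> n * dist (u n) ob)"
  shows "\<exists>q\<in>fixpoints_on C T. x \<longlonglongrightarrow> q"
proof -
  have cat: "CAT0 TYPE('a)" and comp: "complete (UNIV::'a set)"
    using assms(1) unfolding hadamard_space_def by auto
  note Cne = assms(2) and Ccl = assms(3) and Ccv = assms(4)
  define P where "P = metric_proj C"
  have Pex: "P z \<in> C \<and> (\<forall>c\<in>C. dist z (P z) \<le> dist z c)" for z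
  proof -
    have "\<exists>p. p \<in> C \<and> (\<forall>c\<in>C. dist z p \<le> dist z c)"
      using proj_exists[OF cat comp Ccl Cne Ccv, of z] by blast
    then show ?thesis unfolding P_def metric_proj_def by (rule someI_ex)
  qed
  have PC: "P z \<in> C" for z using Pex by blast
  have Ppy: "(dist z (P z))^2 + (dist (P z) c)^2 \<le> (dist z c)^2" if "c \<in> C" for z c
    using pythag[OF cat Ccv PC[of z] _ that] Pex[of z] by blast
  have Pne: "dist (P z) c \<le> dist z c" if "c \<in> C" for z c
  proof -
    have "(dist (P z) c)^2 \<le> (dist z c)^2" using Ppy[OF that, of z] zero_le_power2[of "dist z (P z)"] by linarith
    then show ?thesis by (simp add: power2_le_iff_abs_le)
  qed
  have al: "0 < \<alpha> n" "\<alpha> n < 1" for n using assms(8)[of n] by auto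
  have be: "0 < \<beta> n" "\<beta> n < 1" for n using assms(9)[of n] by auto
  have al01: "\<alpha> n \<in> {0..1}" for n using al[of n] by auto
  have be01: "1 - \<beta> n \<in> {0..1}" for n using be[of n] by auto
  have xS: "x (Suc n) = geo_comb (1 - \<beta> n) (x n) (P (y n))" for n using assms(12) by (simp add: P_def)
  have xC: "x n \<in> C" for n
  proof (induction n)
    case 0 then show ?case using assms(10) .
  next
    case (Suc n) then show ?case using Ccv PC be01 unfolding geo_convex_def xS by blast
  qed
  have TC: "T z \<in> C" if "z \<in> C" for z using assms(5) that by blast
  have nT: "dist (T a) (T b) \<le> dist a b" if "a \<in> C" "b \<in> C" for a b
    using assms(6) that unfolding nonexpansive_on_def by blast
  define F where "F = fixpoints_on C T"
  have Fcl: "closed F" unfolding F_def by (rule fix_closed[OF Ccl assms(6)])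
  have Fcv: "geo_convex F" unfolding F_def by (rule fix_convex[OF cat Ccv assms(6)])
  have Fne: "F \<noteq> {}" using assms(7) by (simp add: F_def)
  obtain q where q: "q \<in> F" "\<forall>c\<in>F. dist ob q \<le> dist ob c"
    using proj_exists[OF cat comp Fcl Fne Fcv, of ob] by blast
  have qC: "q \<in> C" and Tq: "T q = q" using q(1) by (auto simp: F_def fixpoints_on_def)
  define Dq where "Dq = dist ob q"
  define e where "e n = dist (u n) ob" for n
  define a where "a n = \<alpha> n * e n" for n
  have a0: "0 \<le> a n" for n using al[of n] by (simp add: a_def e_def)
  have "a = (\<lambda>n. \<alpha> n * dist (u n) ob)" by (simp add: a_def e_def fun_eq_iff)
  then have asum: "summable a" using assms(17) by simp
  define A where "A = suminf a"
  have aA: "a n \<le> A" for n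
  proof -
    have "sum a {n} \<le> suminf a" by (rule sum_le_suminf[OF asum]) (use a0 in auto)
    then show ?thesis by (simp add: A_def)
  qed
  define M where "M = max (dist (x 0) q) Dq"
  have bnd: "dist (x n) q \<le> M + sum a {..<n}" for n
  proof (induction n)
    case 0 then show ?case by (simp add: M_def)
  next
    case (Suc n)
    define X where "X = dist (x n) q"
    have S0: "0 \<le> sum a {..<n}" using a0 by (simp add: sum_nonneg)
    have d1: "dist (x (Suc n)) q \<le> (1 - \<beta> n) * X + (1 - (1 - \<beta> n)) * dist (P (y n)) q"
      unfolding xS X_def by (rule geo_LIN[OF cat be01])
    have d2: "dist (P (y n)) q \<le> dist (y n) q" by (rule Pne[OF qC])
    have d3: "dist (y n) q \<le> \<alpha> n * dist (u n) q + (1 - \<alpha> n) * dist (T (x n)) q"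
      unfolding assms(11) by (rule geo_LIN[OF cat al01])
    have d4: "dist (u n) q \<le> e n + Dq" unfolding e_def Dq_def by (metis dist_commute dist_triangle)
    have d5: "dist (T (x n)) q \<le> X" using nT[OF xC qC] Tq by (simp add: X_def)
    have "\<alpha> n * dist (u n) q \<le> \<alpha> n * (e n + Dq)" using d4 al[of n] by (intro mult_left_mono) auto
    moreover have "(1 - \<alpha> n) * dist (T (x n)) q \<le> (1 - \<alpha> n) * X" using d5 al[of n] by (intro mult_left_mono) auto
    ultimately have d6: "dist (y n) q \<le> \<alpha> n * (e n + Dq) + (1 - \<alpha> n) * X" using d3 by linarith
    have "\<beta> n * dist (P (y n)) q \<le> \<beta> n * (\<alpha> n * (e n + Dq) + (1 - \<alpha> n) * X)"
      using d2 d6 be[of n] by (intro mult_left_mono) auto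
    then have d7: "dist (x (Suc n)) q \<le> (1 - \<alpha> n * \<beta> n) * X + (\<alpha> n * \<beta> n) * Dq + \<beta> n * a n"
      using d1 by (simp add: a_def algebra_simps)
    have g01: "0 \<le> \<alpha> n * \<beta> n" "\<alpha> n * \<beta> n \<le> 1" using al[of n] be[of n]
      by (auto simp: mult_le_one less_imp_le)
    have "(1 - \<alpha> n * \<beta> n) * X + (\<alpha> n * \<beta> n) * Dq \<le> M + sum a {..<n}"
      by (rule conv_bound[OF g01]) (use Suc.IH S0 in \<open>auto simp: X_def M_def\<close>)
    moreover have "\<beta> n * a n \<le> a n" using be[of n] a0[of n] by (simp add: mult_left_le_one_le less_imp_le)
    ultimately show ?case using d7 by simp
  qed
  define R1 where "R1 = M + A"
  have xb: "dist (x n) q \<le> R1" for n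
  proof -
    have "sum a {..<n} \<le> A" unfolding A_def by (rule sum_le_suminf[OF asum]) (use a0 in auto)
    then show ?thesis using bnd[of n] by (simp add: R1_def)
  qed
  have Txb: "dist (T (x n)) q \<le> R1" for n using nT[OF xC qC, of n] Tq xb[of n] by simp
  have R1nn: "0 \<le> R1" using xb[of 0] zero_le_dist[of "x 0" q] by linarith
  have Dq0: "0 \<le> Dq" by (simp add: Dq_def)
  define z where "z n = P (y n)" for n
  define y' where "y' n = geo_comb (\<alpha> n) ob (T (x n))" for n
  define s where "s n = (dist (x n) q)^2" for n
  define \<gamma> where "\<gamma> n = \<alpha> n * \<beta> n" for n
  define \<delta> where "\<delta> n = Dq^2 - (1 - \<alpha> n) * (dist ob (T (x n)))^2" for n
  define \<eta> where "\<eta> n = \<beta> n * (1 - \<beta> n) * (dist (x n) (z n))^2" for n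
  define R2 where "R2 = Dq + R1"
  define cc where "cc n = a n * (2 * R2 + A)" for n
  have ccs: "summable cc" unfolding cc_def by (rule summable_mult2[OF asum])
  have cc0: "0 \<le> cc n" for n using a0[of n] R1nn Dq0 aA[of n] by (simp add: cc_def R2_def)
  have g01: "0 \<le> \<gamma> n \<and> \<gamma> n \<le> 1" for n using al[of n] be[of n]
    by (auto simp: \<gamma>_def mult_le_one less_imp_le)
  have y'b: "dist (y' n) q \<le> R2" for n
  proof -
    have "dist (y' n) q \<le> \<alpha> n * dist ob q + (1 - \<alpha> n) * dist (T (x n)) q"
      unfolding y'_def by (rule geo_LIN[OF cat al01])
    also have "\<dots> = (1 - \<alpha> n) * dist (T (x n)) q + \<alpha> n * Dq" by (simp add: Dq_def algebra_simps)
    also have "\<dots> \<le> R2" by (rule conv_bound) (use al[of n] Txb[of n] R1nn Dq0 in \<open>auto simp: R2_def\<close>)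
    finally show ?thesis .
  qed
  have yy': "dist (y n) (y' n) \<le> a n" for n
  proof -
    have l: "1 - \<alpha> n \<in> {0..1}" using al[of n] by auto
    have "y n = geo_comb (1 - \<alpha> n) (T (x n)) (u n)" unfolding assms(11) by (rule geo_comb_sym)
    moreover have "y' n = geo_comb (1 - \<alpha> n) (T (x n)) ob" unfolding y'_def by (rule geo_comb_sym)
    ultimately have "dist (y n) (y' n) \<le> (1 - (1 - \<alpha> n)) * dist (u n) ob"
      using geo_TWO[OF cat l] by simp
    then show ?thesis by (simp add: a_def e_def)
  qed
  have Y1: "(dist (y n) q)^2 \<le> (dist (y' n) q)^2 + cc n" for n
  proof -
    have t: "dist (y n) q \<le> dist (y' n) q + a n" using yy'[of n] dist_triangle[of "y n" q "y' n"] by linarith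
    have "(dist (y n) q)^2 \<le> (dist (y' n) q)^2 + a n * (2 * dist (y' n) q + a n)"
      by (rule sq_close[OF _ t a0]) auto
    also have "a n * (2 * dist (y' n) q + a n) \<le> a n * (2 * R2 + A)"
      using a0[of n] y'b[of n] aA[of n] by (intro mult_left_mono) auto
    finally show ?thesis by (simp add: cc_def)
  qed
  have Y2: "(dist (y' n) q)^2 \<le> (1 - \<alpha> n) * s n + \<alpha> n * \<delta> n" for n
  proof -
    have "(dist (y' n) q)^2 \<le> \<alpha> n * (dist ob q)^2 + (1 - \<alpha> n) * (dist (T (x n)) q)^2 - \<alpha> n * (1 - \<alpha> n) * (dist ob (T (x n)))^2"
      unfolding y'_def by (rule geo_CN[OF cat al01])
    moreover have "(1 - \<alpha> n) * (dist (T (x n)) q)^2 \<le> (1 - \<alpha> n) * s n"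
    proof -
      have "dist (T (x n)) q \<le> dist (x n) q" using nT[OF xC qC, of n] Tq by simp
      then have "(dist (T (x n)) q)^2 \<le> s n" unfolding s_def by (intro power_mono) auto
      then show ?thesis using al[of n] by (intro mult_left_mono) auto
    qed
    moreover have "\<alpha> n * (dist ob q)^2 - \<alpha> n * (1 - \<alpha> n) * (dist ob (T (x n)))^2 = \<alpha> n * \<delta> n"
      by (simp add: \<delta>_def Dq_def algebra_simps)
    ultimately show ?thesis by linarith
  qed
  have Z: "(dist (z n) q)^2 \<le> (dist (y n) q)^2" for n
    using Ppy[OF qC, of "y n"] zero_le_power2[of "dist (y n) (P (y n))"] unfolding z_def by linarith
  have rec: "s (Suc n) \<le> (1 - \<gamma> n) * s n + \<gamma> n * \<delta> n + \<beta> n * cc n - \<eta> n" for n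
  proof -
    have "s (Suc n) \<le> (1 - \<beta> n) * (dist (x n) q)^2 + (1 - (1 - \<beta> n)) * (dist (z n) q)^2 - (1 - \<beta> n) * (1 - (1 - \<beta> n)) * (dist (x n) (z n))^2"
      unfolding s_def xS z_def by (rule geo_CN[OF cat be01])
    then have h1: "s (Suc n) \<le> (1 - \<beta> n) * s n + \<beta> n * (dist (z n) q)^2 - \<eta> n"
      by (simp add: s_def \<eta>_def algebra_simps)
    have "(dist (z n) q)^2 \<le> (1 - \<alpha> n) * s n + \<alpha> n * \<delta> n + cc n" using Z[of n] Y1[of n] Y2[of n] by linarith
    then have "\<beta> n * (dist (z n) q)^2 \<le> \<beta> n * ((1 - \<alpha> n) * s n + \<alpha> n * \<delta> n + cc n)"
      using be[of n] by (intro mult_left_mono) auto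
    also have "\<dots> = \<beta> n * s n - \<gamma> n * s n + \<gamma> n * \<delta> n + \<beta> n * cc n" by (simp add: \<gamma>_def algebra_simps)
    finally have "\<beta> n * (dist (z n) q)^2 \<le> \<beta> n * s n - \<gamma> n * s n + \<gamma> n * \<delta> n + \<beta> n * cc n" .
    then show ?thesis using h1 by (simp add: algebra_simps)
  qed
  have eta0: "0 \<le> \<eta> n" for n using be[of n] by (simp add: \<eta>_def)
  have s0: "0 \<le> s n" for n by (simp add: s_def)
  have bcc: "\<beta> n * cc n \<le> cc n" for n using be[of n] cc0[of n] by (simp add: mult_left_le_one_le less_imp_le)
  have r1: "\<forall>n. s (Suc n) \<le> (1 - \<gamma> n) * s n + \<gamma> n * \<delta> n + cc n"
    using rec bcc eta0 by (smt (verit))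
  define \<rho> where "\<rho> n = \<gamma> n * \<bar>\<delta> n\<bar> + cc n" for n
  have r2: "\<forall>n. s (Suc n) \<le> s n - \<eta> n + \<rho> n"
  proof
    fix n
    have "\<gamma> n * \<delta> n \<le> \<gamma> n * \<bar>\<delta> n\<bar>" using g01[of n] by (intro mult_left_mono) auto
    moreover have "0 \<le> \<gamma> n * s n" using g01[of n] s0[of n] by simp
    moreover have "(1 - \<gamma> n) * s n = s n - \<gamma> n * s n" by (simp add: algebra_simps)
    ultimately show "s (Suc n) \<le> s n - \<eta> n + \<rho> n" using rec[of n] bcc[of n] by (simp add: \<rho>_def)
  qed
  define Dm where "Dm = Dq^2 + (Dq + R1)^2"
  have dob: "dist ob (T (x n)) \<le> Dq + R1" for n
    using dist_triangle[of ob "T (x n)" q] Txb[of n] by (simp add: Dq_def dist_commute)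
  have dlb: "\<bar>\<delta> n\<bar> \<le> Dm" for n
  proof -
    have "(dist ob (T (x n)))^2 \<le> (Dq + R1)^2" using dob[of n] by (intro power_mono) auto
    moreover have "0 \<le> (1 - \<alpha> n) * (dist ob (T (x n)))^2" using al[of n] by simp
    moreover have "(1 - \<alpha> n) * (dist ob (T (x n)))^2 \<le> (dist ob (T (x n)))^2"
      using al[of n] by (simp add: mult_left_le_one_le)
    ultimately show ?thesis unfolding \<delta>_def Dm_def by (simp add: abs_le_iff) (smt (verit) zero_le_power2)
  qed
  have rho: "\<rho> \<longlonglongrightarrow> 0"
  proof (rule real_tendsto_sandwich)
    show "eventually (\<lambda>n. 0 \<le> \<rho> n) sequentially"
      using g01 cc0 by (auto intro!: always_eventually simp: \<rho>_def)
    show "eventually (\<lambda>n. \<rho> n \<le> \<alpha> n * Dm + cc n) sequentially"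
    proof (intro always_eventually allI)
      fix n
      have "\<gamma> n \<le> \<alpha> n" using al[of n] be[of n] by (simp add: \<gamma>_def mult_left_le_one_le less_imp_le)
      then have "\<gamma> n * \<bar>\<delta> n\<bar> \<le> \<alpha> n * Dm" using dlb[of n] g01[of n] by (intro mult_mono) auto
      then show "\<rho> n \<le> \<alpha> n * Dm + cc n" by (simp add: \<rho>_def)
    qed
    show "(\<lambda>n. 0::real) \<longlonglongrightarrow> 0" by simp
    have "cc \<longlonglongrightarrow> 0" by (rule summable_LIMSEQ_zero[OF ccs])
    then show "(\<lambda>n. \<alpha> n * Dm + cc n) \<longlonglongrightarrow> 0" using assms(13) by (auto intro!: tendsto_eq_intros)
  qed
  obtain a1 where a1: "0 < ereal a1" "ereal a1 < liminf (\<lambda>n. ereal (\<beta> n))"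
    using ereal_dense2[OF assms(15)] by blast
  obtain b1 where b1: "limsup (\<lambda>n. ereal (\<beta> n)) < ereal b1" "ereal b1 < 1"
    using ereal_dense2[OF assms(16)] by blast
  have a1p: "0 < a1" and b1l: "b1 < 1" using a1(1) b1(2) by auto
  have eva: "eventually (\<lambda>n. a1 < \<beta> n) sequentially"
    using less_LiminfD[OF a1(2)] by simp
  have evb: "eventually (\<lambda>n. \<beta> n < b1) sequentially"
    using Limsup_lessD[OF b1(1)] by simp
  define kap where "kap = a1 * (1 - b1)"
  have kap: "0 < kap" using a1p b1l by (simp add: kap_def)
  have evk: "eventually (\<lambda>n. kap \<le> \<beta> n * (1 - \<beta> n)) sequentially"
    using eventually_conj[OF eva evb]
  proof (rule eventually_mono)
    fix n assume "a1 < \<beta> n \<and> \<beta> n < b1"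
    then show "kap \<le> \<beta> n * (1 - \<beta> n)" unfolding kap_def using a1p b1l
      by (intro mult_mono) auto
  qed
  have divg: "\<not> summable \<gamma>"
  proof
    assume "summable \<gamma>"
    then have S: "summable (\<lambda>n. \<gamma> n / a1)" by (rule summable_divide)
    have E: "eventually (\<lambda>n. norm (\<alpha> n) \<le> \<gamma> n / a1) sequentially"
      using eva
    proof (rule eventually_mono)
      fix n assume "a1 < \<beta> n"
      then have "\<alpha> n * a1 \<le> \<alpha> n * \<beta> n" using al[of n] by (intro mult_left_mono) auto
      then show "norm (\<alpha> n) \<le> \<gamma> n / a1" using al[of n] a1p by (simp add: \<gamma>_def field_simps)
    qed
    have "summable \<alpha>" by (rule summable_comparison_test_ev[OF E S])
    then show False using assms(14) by simp
  qed
  define \<xi> where "\<xi> n = a n + \<alpha> n * (Dq + R1)" for n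
  have xi0: "\<xi> \<longlonglongrightarrow> 0"
  proof -
    have "a \<longlonglongrightarrow> 0" by (rule summable_LIMSEQ_zero[OF asum])
    then show ?thesis unfolding \<xi>_def[abs_def] using assms(13) by (auto intro!: tendsto_eq_intros)
  qed
  have zT: "dist (z n) (T (x n)) \<le> \<xi> n" for n
  proof -
    have "dist (z n) (T (x n)) \<le> dist (y n) (T (x n))" unfolding z_def by (rule Pne[OF TC[OF xC]])
    also have "\<dots> = \<alpha> n * dist (u n) (T (x n))" unfolding assms(11) by (rule geo_comb_dist(2)[OF cat al01])
    also have "\<dots> \<le> \<alpha> n * (e n + (Dq + R1))"
    proof -
      have "dist (u n) (T (x n)) \<le> e n + dist ob (T (x n))" unfolding e_def by (rule dist_triangle)
      then have "dist (u n) (T (x n)) \<le> e n + (Dq + R1)" using dob[of n] by linarith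
      then show ?thesis using al[of n] by (intro mult_left_mono) auto
    qed
    also have "\<dots> = \<xi> n" by (simp add: \<xi>_def a_def algebra_simps)
    finally show ?thesis .
  qed
  have cond: "\<forall>\<epsilon>>0. \<exists>\<theta>>0. \<exists>N. \<forall>n\<ge>N. \<eta> n < \<theta> \<longrightarrow> \<delta> n < \<epsilon>"
  proof (rule ccontr)
    assume "\<not> ?thesis"
    then obtain \<epsilon> where ep: "\<epsilon> > 0" and bad: "\<forall>\<theta>>0. \<forall>N. \<exists>n\<ge>N. \<eta> n < \<theta> \<and> \<epsilon> \<le> \<delta> n"
      by (auto simp: not_less) (metis not_le)
    have "\<forall>k. \<exists>n. k \<le> n \<and> \<eta> n < 1 / real (Suc k) \<and> \<epsilon> \<le> \<delta> n"
    proof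
      fix k :: nat
      have "1 / real (Suc k) > 0" by simp
      then show "\<exists>n. k \<le> n \<and> \<eta> n < 1 / real (Suc k) \<and> \<epsilon> \<le> \<delta> n" using bad by blast
    qed
    then obtain nk where nk: "\<And>k. k \<le> nk k" "\<And>k. \<eta> (nk k) < 1 / real (Suc k)" "\<And>k. \<epsilon> \<le> \<delta> (nk k)"
      by metis
    define f where "f k = dist ob (x (nk k))" for k
    have fin: "\<forall>k. f k \<in> {0..Dq + R1}"
    proof
      fix k
      have "dist ob (x (nk k)) \<le> Dq + R1"
        using dist_triangle[of ob "x (nk k)" q] xb[of "nk k"] by (simp add: Dq_def dist_commute)
      then show "f k \<in> {0..Dq + R1}" by (simp add: f_def)
    qed
    obtain m r where mr: "m \<in> {0..Dq + R1}" "strict_mono (r :: nat \<Rightarrow> nat)" "(f \<circ> r) \<longlonglongrightarrow> m"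
      using seq_compactE[OF compact_imp_seq_compact[OF compact_Icc] fin] by blast
    define N' where "N' j = nk (r j)" for j
    have N'ge: "j \<le> N' j" for j using seq_suble[OF mr(2), of j] nk(1)[of "r j"] by (simp add: N'_def)
    have N'lim: "filterlim N' sequentially sequentially"
      unfolding filterlim_at_top
    proof (intro allI)
      fix Z :: nat
      show "eventually (\<lambda>j. Z \<le> N' j) sequentially"
        unfolding eventually_sequentially using N'ge by (meson le_trans)
    qed
    have comp_lim: "(\<lambda>j. g (N' j)) \<longlonglongrightarrow> L" if "g \<longlonglongrightarrow> L" for g :: "nat \<Rightarrow> real" and L
      using filterlim_compose[OF that N'lim] .
    have comp_ev: "eventually (\<lambda>j. Q (N' j)) sequentially" if "eventually Q sequentially" for Q
      using N'lim that unfolding filterlim_iff by blast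
    define w where "w j = x (N' j)" for j
    have eta_lim: "(\<lambda>j. \<eta> (N' j)) \<longlonglongrightarrow> 0"
    proof (rule real_tendsto_sandwich)
      show "eventually (\<lambda>j. 0 \<le> \<eta> (N' j)) sequentially" using eta0 by simp
      show "eventually (\<lambda>j. \<eta> (N' j) \<le> inverse (real (Suc j))) sequentially"
      proof (intro always_eventually allI)
        fix j
        have "\<eta> (N' j) < 1 / real (Suc (r j))" using nk(2) by (simp add: N'_def)
        also have "\<dots> \<le> 1 / real (Suc j)" using seq_suble[OF mr(2), of j] by (simp add: frac_le)
        finally show "\<eta> (N' j) \<le> inverse (real (Suc j))" by (simp add: inverse_eq_divide)
      qed
      show "(\<lambda>j. 0::real) \<longlonglongrightarrow> 0" by simp
      show "(\<lambda>j. inverse (real (Suc j))) \<longlonglongrightarrow> 0" by (rule LIMSEQ_inverse_real_of_nat)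
    qed
    have dxz2: "(\<lambda>j. (dist (w j) (z (N' j)))^2) \<longlonglongrightarrow> 0"
    proof (rule real_tendsto_sandwich)
      show "eventually (\<lambda>j. 0 \<le> (dist (w j) (z (N' j)))^2) sequentially" by simp
      show "eventually (\<lambda>j. (dist (w j) (z (N' j)))^2 \<le> \<eta> (N' j) / kap) sequentially"
        using comp_ev[OF evk]
      proof (rule eventually_mono)
        fix j assume h: "kap \<le> \<beta> (N' j) * (1 - \<beta> (N' j))"
        have "kap * (dist (w j) (z (N' j)))^2 \<le> \<beta> (N' j) * (1 - \<beta> (N' j)) * (dist (w j) (z (N' j)))^2"
          using h by (intro mult_right_mono) auto
        then show "(dist (w j) (z (N' j)))^2 \<le> \<eta> (N' j) / kap" using kap
          by (simp add: \<eta>_def w_def field_simps)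
      qed
      show "(\<lambda>j. 0::real) \<longlonglongrightarrow> 0" by simp
      show "(\<lambda>j. \<eta> (N' j) / kap) \<longlonglongrightarrow> 0" using tendsto_divide[OF eta_lim tendsto_const, of kap] kap by simp
    qed
    have dxz: "(\<lambda>j. dist (w j) (z (N' j))) \<longlonglongrightarrow> 0"
    proof -
      have "(\<lambda>j. sqrt ((dist (w j) (z (N' j)))^2)) \<longlonglongrightarrow> sqrt 0" by (rule tendsto_real_sqrt[OF dxz2])
      then show ?thesis by simp
    qed
    have wT: "(\<lambda>j. dist (w j) (T (w j))) \<longlonglongrightarrow> 0"
    proof (rule Lim_null_comparison)
      show "eventually (\<lambda>j. norm (dist (w j) (T (w j))) \<le> dist (w j) (z (N' j)) + \<xi> (N' j)) sequentially"
      proof (intro always_eventually allI)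
        fix j
        have "dist (w j) (T (w j)) \<le> dist (w j) (z (N' j)) + dist (z (N' j)) (T (w j))" by (rule dist_triangle)
        then show "norm (dist (w j) (T (w j))) \<le> dist (w j) (z (N' j)) + \<xi> (N' j)"
          using zT[of "N' j"] by (simp add: w_def)
      qed
      show "(\<lambda>j. dist (w j) (z (N' j)) + \<xi> (N' j)) \<longlonglongrightarrow> 0"
        using tendsto_add[OF dxz comp_lim[OF xi0]] by simp
    qed
    have wm: "(\<lambda>j. dist ob (w j)) \<longlonglongrightarrow> m" using mr(3) by (simp add: o_def f_def w_def N'_def)
    have wC: "\<forall>j. w j \<in> C" using xC by (simp add: w_def)
    obtain q' where q': "q' \<in> fixpoints_on C T" "dist ob q' \<le> m"
      using demi[OF cat comp Ccl Ccv assms(5) assms(6) wC wT wm] by blast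
    have Dqm: "Dq \<le> m" using q(2) q' by (simp add: F_def Dq_def) (meson order_trans)
    have Twm: "(\<lambda>j. dist ob (T (w j))) \<longlonglongrightarrow> m"
    proof -
      have "(\<lambda>j. dist ob (T (w j)) - dist ob (w j)) \<longlonglongrightarrow> 0"
      proof (rule Lim_null_comparison)
        show "eventually (\<lambda>j. norm (dist ob (T (w j)) - dist ob (w j)) \<le> dist (w j) (T (w j))) sequentially"
        proof (intro always_eventually allI)
          fix j
          show "norm (dist ob (T (w j)) - dist ob (w j)) \<le> dist (w j) (T (w j))"
            using dist_triangle[of ob "T (w j)" "w j"] dist_triangle[of ob "w j" "T (w j)"]
            by (simp add: abs_le_iff dist_commute)
        qed
      qed (rule wT)
      from tendsto_add[OF this wm] show ?thesis by simp
    qed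
    have dl: "(\<lambda>j. \<delta> (N' j)) \<longlonglongrightarrow> Dq^2 - (1 - 0) * m^2"
      unfolding \<delta>_def w_def[symmetric]
      using comp_lim[OF assms(13)] Twm unfolding w_def by (intro tendsto_intros) auto
    have "\<epsilon> \<le> Dq^2 - (1 - 0) * m^2"
      by (rule LIMSEQ_le_const[OF dl]) (use nk(3) in \<open>auto simp: N'_def\<close>)
    moreover have "Dq^2 \<le> m^2" using Dqm Dq0 by (intro power_mono) auto
    ultimately show False using ep by simp
  qed
  have slim: "s \<longlonglongrightarrow> 0" by (rule SY[OF _ g01[THEN allI] divg r1 _ ccs r2 rho cond]) (use s0 cc0 in auto)
  have "(\<lambda>n. dist (x n) q) \<longlonglongrightarrow> 0"
  proof -
    have "(\<lambda>n. sqrt (s n)) \<longlonglongrightarrow> sqrt 0" by (rule tendsto_real_sqrt[OF slim])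
    then show ?thesis by (simp add: s_def)
  qed
  then have "x \<longlonglongrightarrow> q" by (rule tendsto_dist_iff[THEN iffD2])
  then show ?thesis using q(1) by (auto simp: F_def)
qed

end
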